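(* Let $q$ be a prime power, $m>4$, $V=\mathbb F_q^m$, and $\mu=m-1$. Every $(\mu+1)$-dimensional subspace of $\bigwedge^2V$ contains at most $(q^{\mu}-1)+q^2(q-1)$ decomposable vectors.
   Context: A nonzero $\omega\in\bigwedge^2V$ is decomposable if $\omega=u\wedge v$ for some $u,v\in V$. *)

theory Defs
  imports "HOL-Analysis.Analysis"
begin

text \<open>Model of the exterior square: for V = F^'m, the space \<and>^2 V is identified with
  the space of alternating m x m matrices (indexed by 'm \<times> 'm), with
  u \<and> v represented by the matrix (u_i v_j - u_j v_i).\<close>

definition wedge :: "'a::field ^ 'm::finite \<Rightarrow> 'a ^ 'm \<Rightarrow> 'a ^ ('m::finite \<times> 'm)" where
  "wedge u v = (\<chi> ij. u $ fst ij * v $ snd ij - u $ snd ij * v $ fst ij)"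

definition ext2 :: "('a::field ^ ('m::finite \<times> 'm)) set" where
  "ext2 = vec.span (range (\<lambda>(u, v). wedge (u :: 'a ^ 'm) v))"

definition decomposable :: "'a::field ^ ('m::finite \<times> 'm) \<Rightarrow> bool" where
  "decomposable w \<longleftrightarrow> w \<noteq> 0 \<and> (\<exists>u v :: 'a ^ 'm. w = wedge u v)"

end

theory Submission
  imports Defs
begin


lemma wedge_add1: "wedge (u + u') v = wedge u v + wedge u' v"
  by (simp add: wedge_def vec_eq_iff algebra_simps)
lemma wedge_add2: "wedge u (v + v') = wedge u v + wedge u v'"
  by (simp add: wedge_def vec_eq_iff algebra_simps)
lemma wedge_scale1: "wedge (c *s u) v = c *s wedge u v"
  by (simp add: wedge_def vec_eq_iff algebra_simps)
lemma wedge_scale2: "wedge u (c *s v) = c *s wedge u v"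
  by (simp add: wedge_def vec_eq_iff algebra_simps)
lemma wedge_anti: "wedge v u = - wedge u v"
  by (simp add: wedge_def vec_eq_iff algebra_simps)
lemma wedge_self[simp]: "wedge u u = 0"
  by (simp add: wedge_def vec_eq_iff algebra_simps)
lemma linear_wedge2: "Vector_Spaces.linear (*s) (*s) (wedge u)"
  by (unfold_locales) (simp_all add: wedge_add2 wedge_scale2)
lemma linear_wedge1: "Vector_Spaces.linear (*s) (*s) (\<lambda>u. wedge u v)"
  by (unfold_locales) (simp_all add: wedge_add1 wedge_scale1)

definition ip :: "'a::field ^ 'm::finite \<Rightarrow> 'a ^ 'm \<Rightarrow> 'a" where
  "ip y v = (\<Sum>i\<in>UNIV. y $ i * v $ i)"
definition contr :: "'a::field ^ 'm::finite \<Rightarrow> 'a ^ ('m \<times> 'm) \<Rightarrow> 'a ^ 'm" where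
  "contr y w = (\<chi> j. \<Sum>i\<in>UNIV. y $ i * w $ (i, j))"

lemma contr_add: "contr y (w + w') = contr y w + contr y w'"
  by (simp add: contr_def vec_eq_iff algebra_simps sum.distrib)
lemma contr_scale: "contr y (c *s w) = c *s contr y w"
  by (simp add: contr_def vec_eq_iff algebra_simps sum_distrib_left)
lemma contr_wedge: "contr y (wedge u v) = ip y u *s v - ip y v *s u"
proof -
  have "(\<Sum>i\<in>UNIV. y$i * (u$i* v$j - u$j* v$i)) = (\<Sum>i\<in>UNIV. y$i*u$i)* v$j - (\<Sum>i\<in>UNIV. y$i* v$i)*u$j" for j
  proof -
    have "(\<Sum>i\<in>UNIV. y$i * (u$i* v$j - u$j* v$i)) = (\<Sum>i\<in>UNIV. y$i*u$i* v$j - y$i* v$i*u$j)"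
      by (rule sum.cong) (auto simp: algebra_simps)
    also have "\<dots> = (\<Sum>i\<in>UNIV. y$i*u$i)* v$j - (\<Sum>i\<in>UNIV. y$i* v$i)*u$j"
      by (simp add: sum_subtractf sum_distrib_right)
    finally show ?thesis .
  qed
  then show ?thesis by (simp add: contr_def wedge_def ip_def vec_eq_iff mult.commute)
qed

lemma dual_exists:
  fixes B :: "('a::field ^ 'm::finite) set"
  assumes "vec.independent B" "b \<in> B"
  shows "\<exists>y. ip y b = 1 \<and> (\<forall>b'\<in>B - {b}. ip y b' = 0)"
proof -
  obtain k :: 'm where True by simp
  obtain g where g: "Vector_Spaces.linear (*s) (*s) g" 
     "\<forall>x\<in>B. g x = (if x = b then axis k 1 else 0)"
    using vec.linear_independent_extend[OF assms(1), of "\<lambda>x. if x = b then axis k 1 else 0"] by blast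
  have ipg: "ip (matrix g $ k) v = g v $ k" for v
    using arg_cong[OF matrix_works[OF g(1), of v], of "\<lambda>x. x $ k"] by (simp add: ip_def matrix_vector_mult_def)
  show ?thesis
    by (rule exI[of _ "matrix g $ k"]) (use g(2) assms(2) in \<open>auto simp: ipg\<close>)
qed

lemma wedge_dep_zero:
  assumes "\<not> (vec.independent {a, b} \<and> a \<noteq> b)"
  shows "wedge a b = (0::'a::field^('m::finite \<times> 'm))"
proof (cases "a = b")
  case True then show ?thesis by simp
next
  case False
  then have "\<not> vec.independent {a, b}" using assms by auto
  then have "b = 0 \<or> a \<in> vec.span {b}"
    using False by (auto simp: vec.independent_insert)
  then show ?thesis
  proof
    assume "b = 0" then show ?thesis by (simp add: wedge_def vec_eq_iff)
  next
    assume "a \<in> vec.span {b}"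
    then obtain c where "a = c *s b" by (auto simp: vec.span_singleton)
    then show ?thesis by (simp add: wedge_scale1)
  qed
qed

lemma wedge_nz_indep:
  assumes "wedge a b \<noteq> (0::'a::field^('m::finite \<times> 'm))"
  shows "vec.independent {a, b}" "a \<noteq> b"
  using wedge_dep_zero assms by blast+

lemma wedge_zero_span:
  fixes p x :: "'a::field^'m::finite"
  assumes "wedge p x = 0" "p \<noteq> 0"
  shows "x \<in> vec.span {p}"
proof (rule ccontr)
  assume nx: "x \<notin> vec.span {p}"
  then have xp: "x \<noteq> p" "x \<noteq> 0" using vec.span_base vec.span_zero by auto
  have ind: "vec.independent {x, p}"
    using nx assms(2) by (auto simp: vec.independent_insert)
  obtain y where y: "ip y p = 1" "ip y x = 0"
    using dual_exists[OF ind, of p] xp by auto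
  have "contr y (wedge p x) = x" by (simp add: contr_wedge y)
  then show False using assms(1) xp by (simp add: contr_def vec_eq_iff)
qed

lemma span2_sub: "a \<in> vec.span S \<Longrightarrow> b \<in> vec.span S \<Longrightarrow> c *s a - d *s b \<in> vec.span S"
  by (simp add: vec.span_diff vec.span_scale)

lemma rank_lemma:
  fixes a b p x u v :: "'a::field^'m::finite"
  assumes ind: "vec.independent {a, b, p}" and dist: "a \<noteq> b" "a \<noteq> p" "b \<noteq> p"
    and eq: "wedge u v = wedge a b + wedge p x"
  shows "x \<in> vec.span {p, a, b}"
proof (rule ccontr)
  assume nx: "x \<notin> vec.span {p, a, b}"
  have nx': "x \<notin> vec.span {a, b, p}" using nx by (simp add: insert_commute)
  have ind4: "vec.independent {x, a, b, p}"
    using ind nx' by (simp add: vec.independent_insert vec.span_base)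
  have xd: "x \<noteq> a" "x \<noteq> b" "x \<noteq> p" using nx vec.span_base[of _ "{p, a, b}"] by auto
  have key: "\<And>y. contr y (wedge a b + wedge p x) \<in> vec.span {u, v}"
  proof -
    fix y
    have "contr y (wedge a b + wedge p x) = ip y u *s v - ip y v *s u"
      by (simp add: eq[symmetric] contr_wedge)
    also have "\<dots> \<in> vec.span {u, v}"
      by (intro span2_sub vec.span_base) auto
    finally show "contr y (wedge a b + wedge p x) \<in> vec.span {u, v}" .
  qed
  have cw: "contr y (wedge a b + wedge p x) = ip y a *s b - ip y b *s a + (ip y p *s x - ip y x *s p)" for y
    by (simp add: contr_add contr_wedge)
  obtain ya where ya: "ip ya a = 1" "ip ya b = 0" "ip ya p = 0" "ip ya x = 0"
    using dual_exists[OF ind4, of a] xd dist by auto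
  obtain yb where yb: "ip yb a = 0" "ip yb b = 1" "ip yb p = 0" "ip yb x = 0"
    using dual_exists[OF ind4, of b] xd dist by auto
  obtain yp where yp: "ip yp a = 0" "ip yp b = 0" "ip yp p = 1" "ip yp x = 0"
    using dual_exists[OF ind4, of p] xd dist by auto
  obtain yx where yx: "ip yx a = 0" "ip yx b = 0" "ip yx p = 0" "ip yx x = 1"
    using dual_exists[OF ind4, of x] xd dist by auto
  have "b \<in> vec.span {u, v}" using key[of ya] by (simp add: cw ya)
  moreover have "a \<in> vec.span {u, v}"
    using key[of yb] vec.span_neg[of "-a" "{u,v}"] by (simp add: cw yb)
  moreover have "x \<in> vec.span {u, v}" using key[of yp] by (simp add: cw yp)
  moreover have "p \<in> vec.span {u, v}"
    using key[of yx] vec.span_neg[of "-p" "{u,v}"] by (simp add: cw yx)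
  ultimately have "{x, a, b, p} \<subseteq> vec.span {u, v}" by auto
  from vec.independent_span_bound[OF _ ind4 this] have "card {x, a, b, p} \<le> card {u, v}" by simp
  moreover have "card {x, a, b, p} = 4" using xd dist by auto
  moreover have "card {u, v} \<le> 2" by (simp add: card_insert_le_m1)
  ultimately show False by simp
qed

lemma card_span_indep:
  fixes B :: "('a::{finite,field}^'m::finite) set"
  assumes "finite B" "vec.independent B"
  shows "card (vec.span B) = CARD('a) ^ card B"
  using assms
proof (induction B rule: finite_induct)
  case empty then show ?case by simp
next
  case (insert b B)
  have indB: "vec.independent B" using insert.prems vec.independent_mono by blast
  have nb: "b \<notin> vec.span B" using insert.prems insert.hyps by (simp add: vec.independent_insert)
  have img: "vec.span (insert b B) = (\<lambda>(c, v). c *s b + v) ` (UNIV \<times> vec.span B)"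
  proof
    show "vec.span (insert b B) \<subseteq> (\<lambda>(c, v). c *s b + v) ` (UNIV \<times> vec.span B)"
    proof
      fix x assume "x \<in> vec.span (insert b B)"
      then obtain k where "x - k *s b \<in> vec.span B" by (auto simp: vec.span_insert)
      then show "x \<in> (\<lambda>(c, v). c *s b + v) ` (UNIV \<times> vec.span B)"
        by (intro image_eqI[of _ _ "(k, x - k *s b)"]) auto
    qed
  next
    show "(\<lambda>(c, v). c *s b + v) ` (UNIV \<times> vec.span B) \<subseteq> vec.span (insert b B)"
    proof clarify
      fix c v assume "v \<in> vec.span B"
      then have "(c *s b + v) - c *s b \<in> vec.span B" by simp
      then show "c *s b + v \<in> vec.span (insert b B)" unfolding vec.span_insert by blast
    qed
  qed
  have inj: "inj_on (\<lambda>(c, v). c *s b + v) (UNIV \<times> vec.span B)"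
  proof (rule inj_onI, clarify)
    fix c v c' v' assume v: "v \<in> vec.span B" "v' \<in> vec.span B" and e: "c *s b + v = c' *s b + v'"
    have "(c - c') *s b = v' - v" using e by (simp add: algebra_simps vector_sadd_rdistrib vector_ssub_ldistrib)
    show "c = c' \<and> v = v'"
    proof (cases "c = c'")
      case True then show ?thesis using e by simp
    next
      case False
      have h1: "inverse (c - c') *s ((c - c') *s b) = b" using False by (simp only: vector_smult_assoc) simp
      have "b = inverse (c - c') *s (v' - v)"
        using \<open>(c - c') *s b = v' - v\<close> h1 by metis
      then have "b \<in> vec.span B" using v by (simp add: vec.span_diff vec.span_scale)
      then show ?thesis using nb by simp
    qed
  qed
  have "card (vec.span (insert b B)) = card (UNIV \<times> vec.span B :: ('a \<times> _) set)"
    using card_image[OF inj] img by (simp only:)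
  also have "\<dots> = CARD('a) * CARD('a) ^ card B"
    using insert.IH[OF indB] by (simp add: card_cartesian_product)
  finally show ?case using insert.hyps by simp
qed

lemma card_subspace:
  fixes U :: "('a::{finite,field}^'m::finite) set"
  assumes "vec.subspace U"
  shows "card U = CARD('a) ^ vec.dim U"
proof -
  obtain B where B: "B \<subseteq> U" "vec.independent B" "U \<subseteq> vec.span B" "card B = vec.dim U"
    using vec.basis_exists by blast
  have "vec.span B = U" using B assms vec.span_minimal by blast
  moreover have "finite B" by simp
  ultimately show ?thesis using card_span_indep[OF _ B(2)] B(4) by simp
qed

lemma wedge_span:
  fixes a b :: "'a::field^'m::finite"
  assumes "a \<in> vec.span S" "b \<in> vec.span S"
  shows "wedge a b \<in> vec.span {wedge s t | s t. s \<in> S \<and> t \<in> S}"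
proof -
  let ?T = "{wedge s t | s t. s \<in> S \<and> t \<in> S}"
  have s1: "wedge s a \<in> vec.span ?T" if "s \<in> S" for s
  proof -
    have "wedge s a \<in> wedge s ` vec.span S" using assms(1) by blast
    also have "\<dots> = vec.span (wedge s ` S)" by (simp add: vec.linear_span_image[OF linear_wedge2])
    also have "\<dots> \<subseteq> vec.span ?T" by (rule vec.span_mono) (use that in blast)
    finally show ?thesis .
  qed
  have s2: "wedge a s \<in> vec.span ?T" if "s \<in> S" for s
    using vec.span_neg[OF s1[OF that]] by (simp add: wedge_anti[of a s])
  have "wedge a b \<in> wedge a ` vec.span S" using assms(2) by blast
  also have "\<dots> = vec.span (wedge a ` S)" by (simp add: vec.linear_span_image[OF linear_wedge2])
  also have "\<dots> \<subseteq> vec.span ?T" by (rule vec.span_minimal) (use s2 in auto)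
  finally show ?thesis .
qed

lemma span2_repr:
  fixes x a b :: "'a::field^'m::finite"
  assumes "x \<in> vec.span {a, b}"
  obtains k l where "x = k *s a + l *s b"
proof -
  obtain k where "x - k *s a \<in> vec.span {b}" using assms by (auto simp: vec.span_insert)
  then obtain l where "x - k *s a = l *s b" by (auto simp: vec.span_singleton)
  then have "x = k *s a + l *s b" by (simp add: algebra_simps)
  then show ?thesis using that by blast
qed

lemma wedge_rebase:
  fixes x a b :: "'a::field^'m::finite"
  assumes "x \<in> vec.span {a, b}" "x \<noteq> 0"
  shows "\<exists>y. wedge a b = wedge x y"
proof -
  obtain k l where x: "x = k *s a + l *s b" using span2_repr[OF assms(1)] by blast
  show ?thesis
  proof (cases "k = 0")
    case False
    have "wedge x (inverse k *s b) = wedge a b"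
      using False by (simp add: x wedge_add1 wedge_scale1 wedge_scale2 vector_smult_assoc)
    then show ?thesis by metis
  next
    case True
    then have l: "l \<noteq> 0" using assms(2) x by auto
    have "wedge x (- (inverse l) *s a) = wedge a b"
      using True l by (simp add: x wedge_def vec_eq_iff field_simps)
    then show ?thesis by metis
  qed
qed

lemma dim_range_wedge:
  fixes p :: "'a::field^'m::finite"
  assumes p0: "p \<noteq> 0"
  shows "vec.dim (range (wedge p)) \<le> CARD('m) - 1"
proof -
  let ?B = "vec.extend_basis {p}"
  have ip: "vec.independent {p}" using p0 by (simp add: vec.independent_insert)
  have pB: "p \<in> ?B" using vec.extend_basis_superset[OF ip] by auto
  have fB: "finite ?B" using vec.finiteI_independent[OF vec.independent_extend_basis[OF ip]] .
  have cB: "card ?B = CARD('m)"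
    using vec.basis_card_eq_dim[of ?B UNIV] vec.independent_extend_basis[OF ip] vec_dim_card
      vec.span_extend_basis[OF ip] by auto
  have "range (wedge p) = wedge p ` vec.span ?B" using vec.span_extend_basis[OF ip] by simp
  also have "\<dots> = vec.span (wedge p ` ?B)" by (simp add: vec.linear_span_image[OF linear_wedge2])
  also have "wedge p ` ?B = insert 0 (wedge p ` (?B - {p}))"
    using pB by (auto intro: image_eqI[of 0 "wedge p" p])
  finally have "range (wedge p) = vec.span (wedge p ` (?B - {p}))" by simp
  then have "vec.dim (range (wedge p)) \<le> card (wedge p ` (?B - {p}))"
    using fB by (intro vec.dim_le_card) auto
  also have "\<dots> \<le> card (?B - {p})" by (rule card_image_le) (use fB in simp)
  also have "\<dots> = CARD('m) - 1" using cB pB by simp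
  finally show ?thesis .
qed



definition cos :: "('a::field ^ 'k::finite) set \<Rightarrow> 'a ^ 'k \<Rightarrow> ('a ^ 'k) set" where
  "cos Z w = (\<lambda>z. w + z) ` Z"

lemma cos_mem: "vec.subspace Z \<Longrightarrow> w \<in> cos Z w"
  unfolding cos_def using vec.subspace_0 by force

lemma cos_eq: assumes "vec.subspace Z" "y - w \<in> Z" shows "cos Z y = cos Z w"
proof -
  have "cos Z y \<subseteq> cos Z w" if "y - w \<in> Z" for y w
  proof
    fix x assume "x \<in> cos Z y"
    then obtain z where z: "z \<in> Z" "x = y + z" by (auto simp: cos_def)
    have "(y - w) + z \<in> Z" using vec.subspace_add[OF assms(1) that z(1)] .
    then show "x \<in> cos Z w" unfolding cos_def using z by (auto intro!: image_eqI[of _ _ "(y - w) + z"])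
  qed
  moreover have "w - y \<in> Z" using vec.subspace_neg[OF assms] by (metis minus_diff_eq)
  ultimately show ?thesis using assms(2) by blast
qed

lemma cos_mem_eq: assumes "vec.subspace Z" "y \<in> cos Z w" shows "cos Z y = cos Z w"
  using assms by (intro cos_eq) (auto simp: cos_def)

lemma cos_zero: "cos Z 0 = Z" by (simp add: cos_def)

lemma cos_eq_Z: assumes "vec.subspace Z" shows "cos Z w = Z \<longleftrightarrow> w \<in> Z"
proof
  assume "cos Z w = Z" then show "w \<in> Z" using cos_mem[OF assms, of w] by simp
next
  assume "w \<in> Z" then show "cos Z w = Z" using cos_eq[OF assms, of w 0] cos_zero by simp
qed

lemma card_cos: "card (cos Z w) = card Z"
  unfolding cos_def by (rule card_image) (simp add: inj_on_def)

lemma cos_sub: "vec.subspace W \<Longrightarrow> Z \<subseteq> W \<Longrightarrow> w \<in> W \<Longrightarrow> cos Z w \<subseteq> W"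
  unfolding cos_def using vec.subspace_add by blast


lemma wedge_0_left[simp]: "wedge 0 v = 0" and wedge_0_right[simp]: "wedge u 0 = 0"
  by (simp_all add: wedge_def vec_eq_iff)

lemma arith_AB: "(A::nat) \<ge> 1 \<Longrightarrow> B \<ge> 1 \<Longrightarrow> A + B \<le> A * B + 1"
proof -
  assume "A \<ge> 1" "B \<ge> 1"
  then obtain a b where "A = a + 1" "B = b + 1" by (metis add.commute le_Suc_ex)
  then show ?thesis by (simp add: algebra_simps)
qed

lemma arith3:
  fixes q d n :: nat
  assumes "q \<ge> 2" "3 \<le> d" "d \<le> n"
  shows "q ^ d - 1 + (q ^ (n + 1 - d) - 1) * q ^ 2 \<le> q ^ n - 1 + q ^ 2 * (q - 1)"
proof -
  obtain s where s: "d = 3 + s" using assms(2) by (metis le_Suc_ex)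
  obtain t where t: "n = d + t" using assms(3) by (metis le_Suc_ex)
  have A: "q ^ s \<ge> 1" and B: "q ^ t \<ge> 1" using assms(1) by simp_all
  have ab: "q ^ s + q ^ t \<le> q ^ s * q ^ t + 1" by (rule arith_AB[OF A B])
  have e1: "q ^ d = q^3 * q^s" by (simp add: s power_add)
  have "n + 1 - d = Suc t" by (simp add: t)
  then have e2: "q ^ (n + 1 - d) = q * q ^ t" by simp
  have e3: "q ^ n = q^3 * (q^s * q^t)" by (simp add: t s power_add)
  have q1: "q ^ 3 * q ^ s \<ge> 1" "q * q^t \<ge> 1" "q ^ 3 * (q ^ s * q ^ t) \<ge> 1" "q \<ge> 1"
    using assms(1) A B by (simp_all add: one_le_mult_iff)
  have "q^3 * q^s + q^3 * q^t \<le> q^3 * (q^s * q^t) + q^3"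
    using mult_le_mono2[OF ab, of "q^3"] by (simp add: algebra_simps)
  then have "q^3 * q^s - 1 + (q * q^t - 1) * q^2 \<le> q^3 * (q^s * q^t) - 1 + q^2 * (q - 1)"
    using q1 by (simp add: algebra_simps diff_mult_distrib power_numeral_reduce)
  then show ?thesis unfolding e1 e2 e3 .
qed

lemma arith2:
  fixes q n k N :: nat
  assumes "q \<ge> 2" "n \<ge> 2" "k \<le> q - 1" "k \<le> N" "N = q ^ (n - 1) - 1"
  shows "q ^ 2 - 1 + (q ^ 2 * k + q * (N - k)) \<le> q ^ n - 1 + q ^ 2 * (q - 1)"
proof -
  have qn: "q ^ n = q * q ^ (n - 1)" using assms(2) by (cases n) auto
  have N1: "q ^ (n - 1) = N + 1" using assms(1,5) by simp
  have "q^2 + q^2 * k + q * (N - k) \<le> q * (N + 1) + q^2 * (q - 1)"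
  proof -
    have "q * (N - k) + q * k = q * N" using assms(4) by (simp add: add_mult_distrib2[symmetric])
    moreover have "q^2 * k + q^2 \<le> q * k + q + q^2 * (q - 1)"
    proof -
      obtain r where r: "q = r + 2" using assms(1) by (metis add.commute le_Suc_ex)
      have "k \<le> r + 1" using assms(3) r by simp
      then obtain j where j: "r + 1 = k + j" by (metis le_Suc_ex)
      show ?thesis using j unfolding r by (simp add: algebra_simps power2_eq_square)
    qed
    moreover have "q * (N + 1) = q * N + q" by simp
    ultimately show ?thesis by linarith
  qed
  moreover have "q^2 \<ge> 1" using assms(1) by simp
  ultimately show ?thesis using qn N1 by simp
qed


lemma card_field_ge2: "CARD('a::{finite,field}) \<ge> 2"
proof -
  have "card {0::'a, 1} = 2" by simp
  moreover have "card {0::'a, 1} \<le> CARD('a)" by (rule card_mono) auto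
  ultimately show ?thesis by simp
qed

theorem lemma6p6:
  fixes W :: "('a::{finite, field} ^ ('m::finite \<times> 'm)) set"
  assumes "CARD('m) > 4"
    and "vec.subspace W"
    and "W \<subseteq> ext2"
    and "vec.dim W = (CARD('m) - 1) + 1"
  shows "card {w \<in> W. decomposable w}
           \<le> (CARD('a) ^ (CARD('m) - 1) - 1) + CARD('a)^2 * (CARD('a) - 1)"
proof -
  define q where "q = CARD('a)"
  define n where "n = CARD('m) - 1"
  have q2: "q \<ge> 2" unfolding q_def by (rule card_field_ge2)
  have n4: "n \<ge> 4" using assms(1) unfolding n_def by simp
  define D where "D = {w \<in> W. decomposable w}"
  have subW: "vec.subspace W" by fact
  have cardW: "card W = q ^ (n + 1)" using card_subspace[OF subW] assms(4) by (simp add: q_def n_def)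
  show ?thesis
  proof (cases "D = {}")
    case True then show ?thesis by (simp add: D_def[symmetric])
  next
    case False
    define Zf where "Zf p = W \<inter> range (wedge p)" for p :: "'a ^ 'm"
    have subZf: "vec.subspace (Zf p)" for p
      unfolding Zf_def by (intro vec.subspace_inter subW vec.linear_subspace_image[OF linear_wedge2]) simp
    define P where "P = UNIV - {0 :: 'a ^ 'm}"
    have finP: "finite P" by simp
    have neP: "P \<noteq> {}"
    proof -
      obtain i :: 'm where True by simp
      have "axis i (1::'a) \<in> P" by (simp add: P_def axis_eq_0_iff)
      then show ?thesis by blast
    qed
    define d where "d = Max ((\<lambda>p. vec.dim (Zf p)) ` P)"
    obtain p where pP: "p \<in> P" and pd: "vec.dim (Zf p) = d"
    proof -
      have "d \<in> (\<lambda>p. vec.dim (Zf p)) ` P" unfolding d_def using finP neP by (intro Max_in) auto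
      then show ?thesis using that by auto
    qed
    have p0: "p \<noteq> 0" using pP by (simp add: P_def)
    have dmax: "vec.dim (Zf p') \<le> d" if "p' \<noteq> 0" for p'
      unfolding d_def using that finP by (intro Max_ge) (auto simp: P_def)
    define Z where "Z = Zf p"
    have subZ: "vec.subspace Z" unfolding Z_def by (rule subZf)
    have ZW: "Z \<subseteq> W" by (simp add: Z_def Zf_def)
    have cardZ: "card Z = q ^ d" using card_subspace[OF subZ] pd by (simp add: Z_def q_def)
    have dle: "d \<le> n"
    proof -
      have "d = vec.dim Z" using pd Z_def by simp
      also have "\<dots> \<le> vec.dim (range (wedge p))" by (rule vec.dim_subset) (auto simp: Z_def Zf_def)
      also have "\<dots> \<le> n" using dim_range_wedge[OF p0] by (simp add: n_def)
      finally show ?thesis .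
    qed
    have dge: "d \<ge> 1"
    proof -
      obtain w where "w \<in> D" using False by blast
      then obtain u v where w: "w \<in> W" "w \<noteq> 0" "w = wedge u v" by (auto simp: D_def decomposable_def)
      have u0: "u \<noteq> 0" using w by auto
      have "{0, w} \<subseteq> Zf u" using w vec.subspace_0[OF subZf] by (auto simp: Zf_def)
      then have "card {0, w} \<le> card (Zf u)" by (intro card_mono) auto
      then have "2 \<le> q ^ vec.dim (Zf u)" using w card_subspace[OF subZf, of u] by (simp add: q_def)
      then have "vec.dim (Zf u) \<noteq> 0" by (intro notI) simp
      then show ?thesis using dmax[OF u0] by (simp del: vec.dim_eq_0)
    qed
    define Q where "Q = cos Z ` W"
    have finQ: "finite Q" by (simp add: Q_def)
    have UQ: "\<Union>Q = W"
    proof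
      show "\<Union>Q \<subseteq> W" using cos_sub[OF subW ZW] by (auto simp: Q_def)
      show "W \<subseteq> \<Union>Q" using cos_mem[OF subZ] by (auto simp: Q_def)
    qed
    have "card Z * card Q = card (\<Union>Q)"
    proof (rule card_partition[OF finQ])
      show "finite (\<Union>Q)" by simp
      show "\<And>c. c \<in> Q \<Longrightarrow> card c = card Z" by (auto simp: Q_def card_cos)
      show "\<And>c1 c2. c1 \<in> Q \<Longrightarrow> c2 \<in> Q \<Longrightarrow> c1 \<noteq> c2 \<Longrightarrow> c1 \<inter> c2 = {}"
      proof -
        fix c1 c2 assume "c1 \<in> Q" "c2 \<in> Q" "c1 \<noteq> c2"
        then obtain w1 w2 where c: "c1 = cos Z w1" "c2 = cos Z w2" by (auto simp: Q_def)
        show "c1 \<inter> c2 = {}"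
        proof (rule ccontr)
          assume "c1 \<inter> c2 \<noteq> {}"
          then obtain y where "y \<in> cos Z w1" "y \<in> cos Z w2" using c by blast
          then have "cos Z w1 = cos Z w2" using cos_mem_eq[OF subZ] by metis
          then show False using c \<open>c1 \<noteq> c2\<close> by simp
        qed
      qed
    qed
    then have "q ^ d * card Q = q ^ (n + 1)" using UQ cardZ cardW by simp
    moreover have "q ^ (n + 1) = q ^ d * q ^ (n + 1 - d)" using dle by (simp flip: power_add)
    ultimately have cardQ: "card Q = q ^ (n + 1 - d)" using q2 by simp
    have ZQ: "Z \<in> Q" unfolding Q_def using cos_zero[of Z] vec.subspace_0[OF subW] by (metis image_eqI)
    have cardQ1: "card (Q - {Z}) = q ^ (n + 1 - d) - 1" using cardQ ZQ finQ by simp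
    have split: "card D \<le> (q ^ d - 1) + (\<Sum>C\<in>Q - {Z}. card (D \<inter> C))"
    proof -
      have "D \<subseteq> (Z - {0}) \<union> (\<Union>C\<in>Q - {Z}. D \<inter> C)"
      proof
        fix w assume w: "w \<in> D"
        show "w \<in> (Z - {0}) \<union> (\<Union>C\<in>Q - {Z}. D \<inter> C)"
        proof (cases "w \<in> Z")
          case True then show ?thesis using w by (auto simp: D_def decomposable_def)
        next
          case False
          have "cos Z w \<in> Q" using w by (auto simp: Q_def D_def)
          moreover have "cos Z w \<noteq> Z" using False cos_eq_Z[OF subZ] by simp
          ultimately show ?thesis using w cos_mem[OF subZ, of w] by blast
        qed
      qed
      then have "card D \<le> card ((Z - {0}) \<union> (\<Union>C\<in>Q - {Z}. D \<inter> C))" by (intro card_mono) auto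
      also have "\<dots> \<le> card (Z - {0}) + card (\<Union>C\<in>Q - {Z}. D \<inter> C)" by (rule card_Un_le)
      also have "card (Z - {0}) = q ^ d - 1" using cardZ vec.subspace_0[OF subZ] by simp
      also have "card (\<Union>C\<in>Q - {Z}. D \<inter> C) \<le> (\<Sum>C\<in>Q - {Z}. card (D \<inter> C))"
        by (rule card_UN_le) (use finQ in simp)
      finally show ?thesis by simp
    qed
    have cosdec: "\<exists>a b. wedge a b \<in> D \<and> wedge a b \<notin> Z \<and> C = cos Z (wedge a b) \<and>
        vec.independent {a, b, p} \<and> a \<noteq> b \<and> a \<noteq> p \<and> b \<noteq> p \<and> p \<notin> vec.span {a, b} \<and>
        card (D \<inter> C) \<le> card {x \<in> vec.span {a, b}. wedge p x \<in> W}"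
      if C: "C \<in> Q - {Z}" "D \<inter> C \<noteq> {}" for C
    proof -
      obtain w where w: "C = cos Z w" "w \<in> W" using C by (auto simp: Q_def)
      obtain w' where w': "w' \<in> D" "w' \<in> C" using C by blast
      then obtain a b where ab: "w' = wedge a b" "w' \<noteq> 0" "w' \<in> W"
        by (auto simp: D_def decomposable_def)
      have Cw': "C = cos Z w'" using cos_mem_eq[OF subZ, of w' w] w w' by simp
      have w'Z: "w' \<notin> Z" using C Cw' cos_eq_Z[OF subZ] by auto
      have abi: "vec.independent {a, b}" "a \<noteq> b" using wedge_nz_indep ab by metis+
      have pn: "p \<notin> vec.span {a, b}"
      proof
        assume "p \<in> vec.span {a, b}"
        then obtain y where "wedge a b = wedge p y" using wedge_rebase p0 by blast
        then have "w' \<in> Z" using ab by (auto simp: Z_def Zf_def)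
        then show False using w'Z by simp
      qed
      have set3: "{a, b, p} = insert p {a, b}" by auto
      have ind3: "vec.independent {a, b, p}" unfolding set3 using abi pn
        by (simp add: vec.independent_insert)
      have ap: "a \<noteq> p" "b \<noteq> p" using pn vec.span_base[of _ "{a, b}"] by auto
      let ?E = "{x \<in> vec.span {a, b}. wedge p x \<in> W}"
      have "D \<inter> C \<subseteq> (\<lambda>x. w' + wedge p x) ` ?E"
      proof
        fix v assume v: "v \<in> D \<inter> C"
        then obtain z where z: "z \<in> Z" "v = w' + z" using Cw' by (auto simp: cos_def)
        then obtain x0 where x0: "z = wedge p x0" "z \<in> W" by (auto simp: Z_def Zf_def)
        obtain u u' where uu: "v = wedge u u'" using v by (auto simp: D_def decomposable_def)
        have "x0 \<in> vec.span {p, a, b}"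
          by (rule rank_lemma[OF ind3 abi(2) ap]) (use uu z x0 ab in simp)
        then obtain k where k: "x0 - k *s p \<in> vec.span {a, b}" by (auto simp: vec.span_insert)
        have "wedge p (x0 - k *s p) = wedge p x0"
          using wedge_add2[of p x0 "- (k *s p)"] wedge_scale2[of p "-k" p] by (simp add: algebra_simps)
        then have "v = w' + wedge p (x0 - k *s p)" "x0 - k *s p \<in> ?E" using z x0 k by auto
        then show "v \<in> (\<lambda>x. w' + wedge p x) ` ?E" by blast
      qed
      then have "card (D \<inter> C) \<le> card ((\<lambda>x. w' + wedge p x) ` ?E)" by (intro card_mono) auto
      also have "\<dots> \<le> card ?E" by (rule card_image_le) simp
      finally show ?thesis using ab w'Z Cw' ind3 abi ap pn w' by blast
    qed
    have Efacts: "vec.subspace {x \<in> vec.span {a, b}. wedge p x \<in> W} \<and>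
        card {x \<in> vec.span {a, b}. wedge p x \<in> W} = q ^ vec.dim {x \<in> vec.span {a, b}. wedge p x \<in> W} \<and>
        card {x \<in> vec.span {a, b}. wedge p x \<in> W} \<le> q ^ 2 \<and> card (vec.span {a, b}) = q ^ 2"
      if "vec.independent {a, b}" "a \<noteq> b" for a b
    proof -
      let ?E = "{x \<in> vec.span {a, b}. wedge p x \<in> W}"
      have sE: "vec.subspace ?E"
      proof -
        have "?E = vec.span {a, b} \<inter> {x. wedge p x \<in> W}" by auto
        moreover have "vec.subspace {x. wedge p x \<in> W}"
          by (rule vec.linear_subspace_linear_preimage[OF linear_wedge2 subW])
        ultimately show ?thesis by (simp add: vec.subspace_inter)
      qed
      have cs: "card (vec.span {a, b}) = q ^ 2"
        using card_span_indep[OF _ that(1)] that(2) by (simp add: q_def power2_eq_square)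
      have "card ?E \<le> card (vec.span {a, b})" by (rule card_mono) auto
      then show ?thesis using sE cs card_subspace[OF sE] by (simp add: q_def)
    qed
    have bnd2: "card (D \<inter> C) \<le> q ^ 2" if C: "C \<in> Q - {Z}" for C
    proof (cases "D \<inter> C = {}")
      case True then show ?thesis by simp
    next
      case False
      then obtain a b where ab: "vec.independent {a, b, p}" "a \<noteq> b" "vec.independent {a, b}"
        "card (D \<inter> C) \<le> card {x \<in> vec.span {a, b}. wedge p x \<in> W}"
        using cosdec[OF C False] vec.independent_mono[of "{a, b, p}" "{a, b}" for a b] by blast
      then show ?thesis using Efacts[OF ab(3,2)] by linarith
    qed
    have target: "card D \<le> q ^ n - 1 + q ^ 2 * (q - 1)"
    proof -
      consider "d = 1" | "d = 2" | "d \<ge> 3" using dge by linarith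
      then show ?thesis
      proof cases
        case 3
        have "(\<Sum>C\<in>Q - {Z}. card (D \<inter> C)) \<le> (\<Sum>C\<in>Q - {Z}. q ^ 2)"
          by (rule sum_mono) (rule bnd2)
        also have "\<dots> = (q ^ (n + 1 - d) - 1) * q ^ 2" using cardQ1 by simp
        finally have "card D \<le> q ^ d - 1 + (q ^ (n + 1 - d) - 1) * q ^ 2" using split by linarith
        also have "\<dots> \<le> q ^ n - 1 + q ^ 2 * (q - 1)" by (rule arith3[OF q2 3 dle])
        finally show ?thesis .
      next
        case 1
        have bnd1: "card (D \<inter> C) \<le> 1" if C: "C \<in> Q - {Z}" for C
        proof (cases "D \<inter> C = {}")
          case True then show ?thesis by simp
        next
          case False
          then obtain a b where ab: "wedge a b \<in> D" "wedge a b \<notin> Z" "vec.independent {a, b}" "a \<noteq> b"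
            "p \<notin> vec.span {a, b}"
            "card (D \<inter> C) \<le> card {x \<in> vec.span {a, b}. wedge p x \<in> W}"
            using cosdec[OF C False] vec.independent_mono[of "{a, b, p}" "{a, b}" for a b] by blast
          have "{x \<in> vec.span {a, b}. wedge p x \<in> W} \<subseteq> {0}"
          proof (rule ccontr)
            assume "\<not> ?thesis"
            then obtain x where x: "x \<in> vec.span {a, b}" "wedge p x \<in> W" "x \<noteq> 0" by auto
            define c1 where "c1 = wedge x p"
            obtain y where y: "wedge a b = wedge x y" using wedge_rebase[OF x(1,3)] by blast
            define c2 where "c2 = wedge a b"
            have c1W: "c1 \<in> W" using vec.subspace_neg[OF subW x(2)] by (simp add: c1_def wedge_anti[of x p])
            have c1Z: "c1 \<in> Zf x" using c1W by (simp add: Zf_def c1_def)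
            have c2Z: "c2 \<in> Zf x" using ab(1) y by (auto simp: Zf_def c2_def D_def)
            have c10: "c1 \<noteq> 0"
            proof
              assume "c1 = 0"
              then have "p \<in> vec.span {x}" using wedge_zero_span[of x p] x(3) by (simp add: c1_def)
              then obtain k where "p = k *s x" by (auto simp: vec.span_singleton)
              then have "p \<in> vec.span {a, b}" using x(1) by (simp add: vec.span_scale)
              then show False using ab(5) by simp
            qed
            have c2n: "c2 \<notin> vec.span {c1}"
            proof
              assume "c2 \<in> vec.span {c1}"
              then obtain k where "c2 = k *s c1" by (auto simp: vec.span_singleton)
              then have "wedge a b = wedge p (- (k *s x))"
                by (simp add: c1_def c2_def wedge_def vec_eq_iff algebra_simps)
              then have "wedge a b \<in> Z" using ab(1) by (auto simp: D_def Z_def Zf_def)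
              then show False using ab(2) by simp
            qed
            have ind: "vec.independent {c2, c1}" using c10 c2n by (simp add: vec.independent_insert)
            have "c2 \<noteq> c1" using c2n vec.span_base[of c1 "{c1}"] by auto
            then have "card {c2, c1} = 2" by simp
            moreover have "card {c2, c1} \<le> vec.dim (Zf x)"
              by (rule vec.independent_card_le_dim) (use c1Z c2Z ind in auto)
            moreover have "vec.dim (Zf x) \<le> 1" using dmax[OF x(3)] 1 by simp
            ultimately show False by simp
          qed
          then have "card {x \<in> vec.span {a, b}. wedge p x \<in> W} \<le> card {0::'a^'m}"
            by (intro card_mono) auto
          then show ?thesis using ab(6) by simp
        qed
        have "(\<Sum>C\<in>Q - {Z}. card (D \<inter> C)) \<le> (\<Sum>C\<in>Q - {Z}. 1)"
          by (rule sum_mono) (rule bnd1)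
        also have "\<dots> = q ^ n - 1" using cardQ1 1 by simp
        finally have "card D \<le> q - 1 + (q ^ n - 1)" using split 1 by simp
        moreover have "q - 1 \<le> q ^ 2 * (q - 1)" using q2 by simp
        ultimately show ?thesis by linarith
      next
        case 2
        define Bad where "Bad = {C \<in> Q - {Z}. q < card (D \<inter> C)}"
        have badform: "\<exists>a b. C = cos Z (wedge a b) \<and> wedge a b \<notin> Z \<and> vec.independent {a, b, p}
             \<and> a \<noteq> b \<and> a \<noteq> p \<and> b \<noteq> p \<and> p \<notin> vec.span {a, b} \<and> wedge p a \<in> W \<and> wedge p b \<in> W"
          if C: "C \<in> Bad" for C
        proof -
          have C1: "C \<in> Q - {Z}" and Cq: "q < card (D \<inter> C)" using C by (auto simp: Bad_def)
          have ne: "D \<inter> C \<noteq> {}" using Cq by (intro notI) simp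
          obtain a b where ab: "C = cos Z (wedge a b)" "wedge a b \<notin> Z" "vec.independent {a, b, p}"
            "a \<noteq> b" "a \<noteq> p" "b \<noteq> p" "p \<notin> vec.span {a, b}"
            "card (D \<inter> C) \<le> card {x \<in> vec.span {a, b}. wedge p x \<in> W}"
            using cosdec[OF C1 ne] by blast
          have iab: "vec.independent {a, b}" using ab(3) vec.independent_mono[of "{a, b, p}" "{a, b}"] by blast
          let ?E = "{x \<in> vec.span {a, b}. wedge p x \<in> W}"
          note EF = Efacts[OF iab ab(4)]
          have "q ^ vec.dim ?E \<le> q ^ 2" using EF by simp
          then have dE2: "vec.dim ?E \<le> 2" using q2 by (simp add: power_le_imp_le_exp)
          have "q < q ^ vec.dim ?E" using EF ab(8) Cq by simp
          then have "\<not> vec.dim ?E \<le> 1"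
            using power_increasing[of "vec.dim ?E" 1 q] q2 by (intro notI) simp
          then have "vec.dim ?E = 2" using dE2 by simp
          then have "card ?E = card (vec.span {a, b})" using EF by simp
          then have "?E = vec.span {a, b}" by (intro card_subset_eq) auto
          then have "a \<in> ?E" "b \<in> ?E" using vec.span_base[of _ "{a, b}"] by auto
          then show ?thesis using ab by blast
        qed
        have cardBad: "card Bad \<le> q - 1"
        proof (cases "Bad = {}")
          case True then show ?thesis by simp
        next
          case False
          then obtain C0 where "C0 \<in> Bad" by blast
          then obtain a0 b0 where ab0: "C0 = cos Z (wedge a0 b0)" "wedge a0 b0 \<notin> Z" "vec.independent {a0, b0, p}"
             "a0 \<noteq> b0" "a0 \<noteq> p" "b0 \<noteq> p" "p \<notin> vec.span {a0, b0}" "wedge p a0 \<in> W" "wedge p b0 \<in> W"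
            using badform by blast
          define w0 where "w0 = wedge a0 b0"
          define c1 where "c1 = wedge p a0"
          define c2 where "c2 = wedge p b0"
          have c1Z: "c1 \<in> Z" and c2Z: "c2 \<in> Z" using ab0 by (auto simp: c1_def c2_def Z_def Zf_def)
          have injp: "inj_on (wedge p) (vec.span {a0, b0})"
          proof -
            have "x = 0" if xs: "x \<in> vec.span {a0, b0}" "wedge p x = 0" for x
            proof (rule ccontr)
              assume x0: "x \<noteq> 0"
              obtain k where k: "x = k *s p" using wedge_zero_span[OF xs(2) p0] by (auto simp: vec.span_singleton)
              then have "k \<noteq> 0" using x0 by auto
              then have "p = inverse k *s x" using k by (simp add: vector_smult_assoc)
              then have "p \<in> vec.span {a0, b0}" using xs(1) by (simp add: vec.span_scale)
              then show False using ab0(7) by simp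
            qed
            then show ?thesis
              using vec.linear_inj_on_iff_eq_0[OF linear_wedge2, of "vec.span {a0, b0}" p] by auto
          qed
          have iab0: "vec.independent {a0, b0}" using ab0(3) vec.independent_mono[of "{a0, b0, p}" "{a0, b0}"] by blast
          have indc: "vec.independent {c1, c2}"
            using vec.linear_independent_injective_image[OF linear_wedge2 iab0 injp] by (simp add: c1_def c2_def)
          have mem0: "a0 \<in> vec.span {a0, b0}" "b0 \<in> vec.span {a0, b0}" by (simp_all add: vec.span_base)
          have c12: "c1 \<noteq> c2"
          proof
            assume "c1 = c2"
            then have "wedge p a0 = wedge p b0" by (simp add: c1_def c2_def)
            then have "a0 = b0" using inj_onD[OF injp _ mem0] by blast
            then show False using ab0(4) by simp
          qed
          have "card {c1, c2} = vec.dim Z" using c12 pd 2 by (simp add: Z_def)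
          then have Zsp: "Z \<subseteq> vec.span {c1, c2}" using vec.card_eq_dim[of "{c1, c2}" Z] indc c1Z c2Z by auto
          have spZ: "vec.span {c1, c2} \<subseteq> Z" using c1Z c2Z subZ by (intro vec.span_minimal) auto
          have spc: "vec.span {c1, c2} = wedge p ` vec.span {a0, b0}"
            using vec.linear_span_image[OF linear_wedge2[of p], of "{a0, b0}"] by (simp add: c1_def c2_def)
          have inspan: "x \<in> vec.span {p, a0, b0}" if wz: "wedge p x \<in> Z" for x
          proof -
            obtain s where s: "s \<in> vec.span {a0, b0}" "wedge p x = wedge p s" using wz Zsp spc by auto
            have "wedge p (x - s) = 0" using s(2) wedge_add2[of p s "x - s"] by simp
            then obtain k where k: "x - s = k *s p" using wedge_zero_span[OF _ p0] by (auto simp: vec.span_singleton)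
            have "s \<in> vec.span {p, a0, b0}" using s(1) vec.span_mono[of "{a0, b0}" "{p, a0, b0}"] by auto
            moreover have "k *s p \<in> vec.span {p, a0, b0}" by (simp add: vec.span_base vec.span_scale)
            ultimately have "s + k *s p \<in> vec.span {p, a0, b0}" by (rule vec.span_add)
            moreover have "x = s + k *s p" using k by (simp add: algebra_simps)
            ultimately show ?thesis by simp
          qed
          have Tsub: "{wedge s t | s t. s \<in> {p, a0, b0} \<and> t \<in> {p, a0, b0}} \<subseteq> vec.span (insert w0 {c1, c2})"
          proof -
            have m: "c1 \<in> vec.span (insert w0 {c1, c2})" "c2 \<in> vec.span (insert w0 {c1, c2})"
              "w0 \<in> vec.span (insert w0 {c1, c2})" by (simp_all add: vec.span_base)
            have n: "- c1 \<in> vec.span (insert w0 {c1, c2})" "- c2 \<in> vec.span (insert w0 {c1, c2})"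
              "- w0 \<in> vec.span (insert w0 {c1, c2})" using m by (simp_all add: vec.span_neg)
            show ?thesis using m n vec.span_zero
              by (auto simp: c1_def c2_def w0_def wedge_anti[of a0 p] wedge_anti[of b0 p] wedge_anti[of b0 a0])
          qed
          have "C \<in> (\<lambda>c. cos Z (c *s w0)) ` (UNIV - {0})" if CB: "C \<in> Bad" for C
          proof -
            obtain a b where ab: "C = cos Z (wedge a b)" "wedge a b \<notin> Z" "wedge p a \<in> W" "wedge p b \<in> W"
              using badform[OF CB] by blast
            have "wedge p a \<in> Z" "wedge p b \<in> Z" using ab by (auto simp: Z_def Zf_def)
            then have "a \<in> vec.span {p, a0, b0}" "b \<in> vec.span {p, a0, b0}" using inspan by auto
            then have "wedge a b \<in> vec.span {wedge s t | s t. s \<in> {p, a0, b0} \<and> t \<in> {p, a0, b0}}"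
              by (rule wedge_span)
            also have "\<dots> \<subseteq> vec.span (insert w0 {c1, c2})" using Tsub by (intro vec.span_minimal) auto
            finally obtain k where k: "wedge a b - k *s w0 \<in> vec.span {c1, c2}" by (auto simp: vec.span_insert)
            then have "wedge a b - k *s w0 \<in> Z" using spZ by auto
            then have ce: "C = cos Z (k *s w0)" using cos_eq[OF subZ] ab(1) by simp
            have "k \<noteq> 0"
            proof
              assume "k = 0"
              then have "wedge a b \<in> Z" using \<open>wedge a b - k *s w0 \<in> Z\<close> by simp
              then show False using ab(2) by simp
            qed
            then show ?thesis using ce by blast
          qed
          then have "Bad \<subseteq> (\<lambda>c. cos Z (c *s w0)) ` (UNIV - {0})" by blast
          then have "card Bad \<le> card ((\<lambda>c. cos Z (c *s w0)) ` (UNIV - {0::'a}))" by (intro card_mono) auto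
          also have "\<dots> \<le> card (UNIV - {0::'a})" by (rule card_image_le) simp
          also have "\<dots> = q - 1" by (simp add: q_def)
          finally show ?thesis .
        qed
        have BadQ: "Bad \<subseteq> Q - {Z}" by (auto simp: Bad_def)
        have finQ': "finite (Q - {Z})" using finQ by simp
        have "(\<Sum>C\<in>Q - {Z}. card (D \<inter> C)) = (\<Sum>C\<in>Bad. card (D \<inter> C)) + (\<Sum>C\<in>(Q - {Z}) - Bad. card (D \<inter> C))"
          using sum.subset_diff[OF BadQ finQ', of "\<lambda>C. card (D \<inter> C)"] by (simp add: add.commute)
        also have "\<dots> \<le> (\<Sum>C\<in>Bad. q ^ 2) + (\<Sum>C\<in>(Q - {Z}) - Bad. q)"
          using BadQ by (intro add_mono sum_mono) (auto simp: Bad_def intro: bnd2)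
        also have "\<dots> = q ^ 2 * card Bad + q * (card (Q - {Z}) - card Bad)"
          using BadQ finQ' by (simp add: card_Diff_subset finite_subset)
        finally have S: "(\<Sum>C\<in>Q - {Z}. card (D \<inter> C)) \<le> q ^ 2 * card Bad + q * (card (Q - {Z}) - card Bad)" .
        have kN: "card Bad \<le> card (Q - {Z})" using BadQ finQ' by (intro card_mono)
        have "card D \<le> q ^ 2 - 1 + (q ^ 2 * card Bad + q * (card (Q - {Z}) - card Bad))"
          using split S unfolding 2 by linarith
        also have "\<dots> \<le> q ^ n - 1 + q ^ 2 * (q - 1)"
          by (rule arith2[OF q2 _ cardBad kN]) (use n4 cardQ1 2 in auto)
        finally show ?thesis .
      qed
    qed
    then show ?thesis by (simp add: D_def q_def n_def)
  qed
qed

end
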